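(* Let $X=\{x_1,\ldots,x_n\}$ and $y$ be distinct variables, and let $V_n = c_X(\{x_1\},\ldots,\{x_n\},\{y\},\{\neg y\})$, i.e., $c_X$ applied to the formula consisting of the unit clauses $x_1,\ldots,x_n, y, \neg y$, where for a formula $F$ $c_X(F) = \{\gamma \vee \neg a \vee \neg b \mid \gamma \in F\} \cup \{\neg x_i \vee v_i \mid 1\le i\le n\} \cup \{x_i \vee v_i \mid 1\le i\le n\} \cup \{\neg v_1 \vee \cdots \vee \neg v_n \vee a\} \cup \{\neg v_1 \vee \cdots \vee \neg v_n \vee b\}$ with new variables $a,b,v_1,\ldots,v_n$. Then, with branching restricted to $X \cup \{y\}$, the minimum-size DPLL-Mono search trees of $V_n$ have size $2^n - 1$.
   Context: A CNF formula is a finite set of clauses; the empty clause is unsatisfiable. For a partial assignment $I$ (set of literals), $F|I$ is obtained by deleting clauses containing a literal true under $I$ and deleting false literals from remaining clauses. $Var(F)$ is the set of variables of $F$. A binary tree is empty $()$ or a triple $(x~T_1~T_2)$; its size is its number of nodes. $U(F)$ denotes the result of exhaustive unit propagation on $F$. For a set $B$ of variables, a DPLL-Mono search tree (DMST) of $F$ with branching restricted to $B$ is: $()$ if $U(F)$ contains the empty clause; otherwise $(x~T_1~T_2)$ with $x \in B \cap Var(U(F))$, $T_1$ a DMST of $U(F|\{\neg x\})$ and $T_2$ a DMST of $U(F|\{x\})$ (branching restricted to $B$). *)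

theory Defs
  imports Main "HOL-Library.Tree"
begin

datatype 'v lit = Pos 'v | Neg 'v

fun var :: "'v lit \<Rightarrow> 'v" where
  "var (Pos x) = x" | "var (Neg x) = x"

fun negate :: "'v lit \<Rightarrow> 'v lit" where
  "negate (Pos x) = Neg x" | "negate (Neg x) = Pos x"

type_synonym 'v clause = "'v lit set"
type_synonym 'v cnf = "'v clause set"

definition Vars :: "'v cnf \<Rightarrow> 'v set" where
  "Vars F = (\<Union>C\<in>F. var ` C)"

definition restrict :: "'v cnf \<Rightarrow> 'v lit set \<Rightarrow> 'v cnf" where
  "restrict F I = {C - negate ` I | C. C \<in> F \<and> C \<inter> I = {}}"

definition up_step :: "'v cnf \<Rightarrow> 'v cnf" where
  "up_step F = (if \<exists>l. {l} \<in> F then restrict F {SOME l. {l} \<in> F} else F)"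

text \<open>Exhaustive unit propagation. Every step with a unit clause removes its variable,
  so for finite formulas card (Vars F) steps suffice to reach a fixed point.\<close>
definition U :: "'v cnf \<Rightarrow> 'v cnf" where
  "U F = (up_step ^^ card (Vars F)) F"

text \<open>DPLL-Mono search trees with branching restricted to B.
  Node T1 x T2 corresponds to the triple (x T1 T2).\<close>
inductive dmst :: "'v set \<Rightarrow> 'v cnf \<Rightarrow> 'v tree \<Rightarrow> bool" for B where
  leaf: "{} \<in> U F \<Longrightarrow> dmst B F Leaf"
| node: "{} \<notin> U F \<Longrightarrow> x \<in> B \<inter> Vars (U F)
     \<Longrightarrow> dmst B (U (restrict (U F) {Neg x})) T1
     \<Longrightarrow> dmst B (U (restrict (U F) {Pos x})) T2
     \<Longrightarrow> dmst B F (Node T1 x T2)"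

definition cX :: "'v cnf \<Rightarrow> (nat \<Rightarrow> 'v) \<Rightarrow> nat \<Rightarrow> 'v \<Rightarrow> 'v \<Rightarrow> (nat \<Rightarrow> 'v) \<Rightarrow> 'v cnf" where
  "cX F x n a b v =
     {insert (Neg a) (insert (Neg b) g) | g. g \<in> F}
   \<union> {{Neg (x i), Pos (v i)} | i. i \<in> {1..n}}
   \<union> {{Pos (x i), Pos (v i)} | i. i \<in> {1..n}}
   \<union> {insert (Pos a) {Neg (v i) | i. i \<in> {1..n}}}
   \<union> {insert (Pos b) {Neg (v i) | i. i \<in> {1..n}}}"

definition Vn :: "(nat \<Rightarrow> 'v) \<Rightarrow> nat \<Rightarrow> 'v \<Rightarrow> 'v \<Rightarrow> 'v \<Rightarrow> (nat \<Rightarrow> 'v) \<Rightarrow> 'v cnf" where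
  "Vn x n y a b v = cX ({{Pos (x i)} | i. i \<in> {1..n}} \<union> {{Pos y}, {Neg y}}) x n a b v"

end

theory Submission
  imports Defs
begin

lemma restrict_single: "restrict F {l} = {C - {negate l} | C. C \<in> F \<and> l \<notin> C}"
  unfolding restrict_def by auto

lemma restrict_insert: "restrict (insert C F) I =
   (if C \<inter> I = {} then insert (C - negate ` I) (restrict F I) else restrict F I)"
  unfolding restrict_def by auto

lemma restrict_empty[simp]: "restrict {} I = {}"
  unfolding restrict_def by auto

lemma up_step_nounit: "\<not>(\<exists>l. {l} \<in> F) \<Longrightarrow> up_step F = F"
  unfolding up_step_def by auto

lemma funpow_fix: "f F = F \<Longrightarrow> (f ^^ k) F = F"
  by (induction k) auto

lemma U_nounit: "\<not>(\<exists>l. {l} \<in> F) \<Longrightarrow> U F = F"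
  unfolding U_def using funpow_fix up_step_nounit by metis

lemma up_step_empty: "{} \<in> F \<Longrightarrow> {} \<in> up_step F"
  unfolding up_step_def restrict_def by auto

lemma funpow_empty: "{} \<in> F \<Longrightarrow> {} \<in> (up_step ^^ k) F"
  by (induction k) (auto intro: up_step_empty)

lemma funpow_empty_mono: "{} \<in> (up_step ^^ j) F \<Longrightarrow> j \<le> k \<Longrightarrow> {} \<in> (up_step ^^ k) F"
proof -
  assume a: "{} \<in> (up_step ^^ j) F" "j \<le> k"
  then obtain d where "k = d + j" by (metis le_add_diff_inverse2)
  then show ?thesis using funpow_empty[OF a(1), of d] by (simp add: funpow_add)
qed

lemma U_empty: "{} \<in> F \<Longrightarrow> {} \<in> U F"
  unfolding U_def by (rule funpow_empty)

lemma up_step_unit: "{l} \<in> F \<Longrightarrow> \<exists>l. {l} \<in> F \<and> up_step F = restrict F {l}"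
  unfolding up_step_def by (metis (mono_tags, lifting) someI_ex)

lemma up_step_unique: "{l} \<in> F \<Longrightarrow> (\<And>m. {m} \<in> F \<Longrightarrow> m = l) \<Longrightarrow> up_step F = restrict F {l}"
  using up_step_unit by metis

lemma step_empty: "(\<And>l. {l} \<in> F \<Longrightarrow> {} \<in> (up_step ^^ k) (restrict F {l})) \<Longrightarrow> {l0} \<in> F
   \<Longrightarrow> {} \<in> (up_step ^^ Suc k) F"
  by (metis funpow_Suc_right o_apply up_step_unit)

lemma Vars_mem: "z \<in> Vars F \<longleftrightarrow> (\<exists>C\<in>F. \<exists>l\<in>C. var l = z)"
  unfolding Vars_def by auto

lemma finite_Vars: "finite F \<Longrightarrow> \<forall>C\<in>F. finite C \<Longrightarrow> finite (Vars F)"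
  unfolding Vars_def by auto

lemma U_shift: "1 \<le> card (Vars F) \<Longrightarrow> U F = (up_step ^^ (card (Vars F) - 1)) (up_step F)"
proof -
  assume "1 \<le> card (Vars F)"
  then have "card (Vars F) = Suc (card (Vars F) - 1)" by simp
  then have "U F = (up_step ^^ Suc (card (Vars F) - 1)) F" unfolding U_def by metis
  then show ?thesis by (simp only: funpow_Suc_right o_apply)
qed

lemma step_empty': "(\<forall>l. {l} \<in> F \<longrightarrow> {} \<in> (up_step ^^ k) (restrict F {l})) \<Longrightarrow> (\<exists>l. {l} \<in> F)
   \<Longrightarrow> {} \<in> (up_step ^^ Suc k) F"
  using step_empty by metis

lemma negate_ne: "negate p \<noteq> p" by (cases p) auto
lemma negate_negate[simp]: "negate (negate p) = p" by (cases p) auto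

lemma comp_pair: "{p} \<in> G \<Longrightarrow> {negate p} \<in> G \<Longrightarrow> (\<And>m. {m} \<in> G \<Longrightarrow> m = p \<or> m = negate p)
  \<Longrightarrow> {} \<in> up_step G"
proof -
  assume a: "{p} \<in> G" "{negate p} \<in> G" "\<And>m. {m} \<in> G \<Longrightarrow> m = p \<or> m = negate p"
  obtain l where l: "{l} \<in> G" "up_step G = restrict G {l}" using up_step_unit[OF a(1)] by blast
  have "l = p \<or> l = negate p" using a(3) l(1) by blast
  then show ?thesis
  proof
    assume "l = p" then show ?thesis unfolding l(2) restrict_single
      using a(2) negate_ne[of p] by force
  next
    assume "l = negate p" then show ?thesis unfolding l(2) restrict_single
      using a(1) negate_ne[of p] by force
  qed
qed

lemma step_by: "{l} \<in> F \<Longrightarrow> (\<And>m. {m} \<in> F \<Longrightarrow> {} \<in> (up_step ^^ k) (restrict F {m}))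
   \<Longrightarrow> {} \<in> (up_step ^^ Suc k) F"
  by (metis funpow_Suc_right o_apply up_step_unit)

lemma step_one: "{} \<in> up_step F \<Longrightarrow> {} \<in> (up_step ^^ Suc k) F"
  by (metis funpow_Suc_right o_apply funpow_empty)

lemma Fc:
  assumes "a \<noteq> b"
  shows "{} \<in> (up_step ^^ Suc (Suc 0)) {{Pos a},{Pos b},{Neg a, Neg b}}"
proof (rule step_by[of "Pos a"])
  fix m assume "{m} \<in> {{Pos a},{Pos b},{Neg a, Neg b}}"
  then have "m = Pos a \<or> m = Pos b" using assms by auto
  then show "{} \<in> (up_step ^^ Suc 0) (restrict {{Pos a}, {Pos b}, {Neg a, Neg b}} {m})"
  proof
    assume m: "m = Pos a"
    have "restrict {{Pos a}, {Pos b}, {Neg a, Neg b}} {m} = {{Pos b},{Neg b}}"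
      using assms m by (auto simp: restrict_insert insert_Diff_if)
    moreover have "{} \<in> up_step {{Pos b},{Neg b}}"
      by (rule comp_pair[of "Pos b"]) auto
    ultimately show ?thesis by simp
  next
    assume m: "m = Pos b"
    have "restrict {{Pos a}, {Pos b}, {Neg a, Neg b}} {m} = {{Pos a},{Neg a}}"
      using assms m by (auto simp: restrict_insert insert_Diff_if)
    moreover have "{} \<in> up_step {{Pos a},{Neg a}}"
      by (rule comp_pair[of "Pos a"]) auto
    ultimately show ?thesis by simp
  qed
qed simp

lemma Fb:
  assumes "a \<noteq> b" "y \<noteq> a" "y \<noteq> b"
  shows "{} \<in> (up_step ^^ Suc (Suc 0)) {{Pos a},{Pos b},{Neg a, Neg b, Pos y},{Neg a, Neg b, Neg y},{Neg a, Neg b}}"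
proof (rule step_by[of "Pos a"])
  let ?F = "{{Pos a},{Pos b},{Neg a, Neg b, Pos y},{Neg a, Neg b, Neg y},{Neg a, Neg b}}"
  fix m assume "{m} \<in> ?F"
  then have "m = Pos a \<or> m = Pos b" using assms by auto
  then show "{} \<in> (up_step ^^ Suc 0) (restrict ?F {m})"
  proof
    assume m: "m = Pos a"
    have "restrict ?F {m} = {{Pos b},{Neg b, Pos y},{Neg b, Neg y},{Neg b}}"
      using assms m by (auto simp: restrict_insert insert_Diff_if)
    moreover have "{} \<in> up_step {{Pos b},{Neg b, Pos y},{Neg b, Neg y},{Neg b}}"
      by (rule comp_pair[of "Pos b"]) auto
    ultimately show ?thesis by simp
  next
    assume m: "m = Pos b"
    have "restrict ?F {m} = {{Pos a},{Neg a, Pos y},{Neg a, Neg y},{Neg a}}"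
      using assms m by (auto simp: restrict_insert insert_Diff_if)
    moreover have "{} \<in> up_step {{Pos a},{Neg a, Pos y},{Neg a, Neg y},{Neg a}}"
      by (rule comp_pair[of "Pos a"]) auto
    ultimately show ?thesis by simp
  qed
qed simp

lemma Fa:
  assumes "a \<noteq> b" "y \<noteq> a" "y \<noteq> b"
  shows "{} \<in> (up_step ^^ Suc (Suc (Suc 0))) {{Pos a},{Pos b},{Neg a, Neg b, Pos y},{Neg a, Neg b, Neg y}}"
proof (rule step_by[of "Pos a"])
  let ?F = "{{Pos a},{Pos b},{Neg a, Neg b, Pos y},{Neg a, Neg b, Neg y}}"
  fix m assume "{m} \<in> ?F"
  then have "m = Pos a \<or> m = Pos b" using assms by auto
  then show "{} \<in> (up_step ^^ Suc (Suc 0)) (restrict ?F {m})"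
  proof
    assume m: "m = Pos a"
    have e: "restrict ?F {m} = {{Pos b},{Neg b, Pos y},{Neg b, Neg y}}"
      using assms m by (auto simp: restrict_insert insert_Diff_if)
    have e2: "up_step {{Pos b},{Neg b, Pos y},{Neg b, Neg y}} = {{Pos y},{Neg y}}"
      by (subst up_step_unique[of "Pos b"]) (use assms in \<open>auto simp: restrict_insert insert_Diff_if\<close>)
    have "{} \<in> up_step {{Pos y},{Neg y}}"
      by (rule comp_pair[of "Pos y"]) auto
    then show ?thesis unfolding e using e2 by (simp del: funpow.simps add: funpow_Suc_right)
  next
    assume m: "m = Pos b"
    have e: "restrict ?F {m} = {{Pos a},{Neg a, Pos y},{Neg a, Neg y}}"
      using assms m by (auto simp: restrict_insert insert_Diff_if)
    have e2: "up_step {{Pos a},{Neg a, Pos y},{Neg a, Neg y}} = {{Pos y},{Neg y}}"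
      by (subst up_step_unique[of "Pos a"]) (use assms in \<open>auto simp: restrict_insert insert_Diff_if\<close>)
    have "{} \<in> up_step {{Pos y},{Neg y}}"
      by (rule comp_pair[of "Pos y"]) auto
    then show ?thesis unfolding e using e2 by (simp del: funpow.simps add: funpow_Suc_right)
  qed
qed simp

lemma restrict_Un: "restrict (A \<union> B) I = restrict A I \<union> restrict B I"
  unfolding restrict_def by auto

lemma restrict_id1: "(\<And>C. C \<in> A \<Longrightarrow> l \<notin> C \<and> negate l \<notin> C) \<Longrightarrow> restrict A {l} = A"
  unfolding restrict_single by force

lemma Vars_Un: "Vars (A \<union> B) = Vars A \<union> Vars B" unfolding Vars_def by auto
lemma Vars_insert: "Vars (insert C A) = var ` C \<union> Vars A" unfolding Vars_def by auto
lemma Vars_empty: "Vars {} = {}" unfolding Vars_def by auto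
lemma Vars_image: "Vars (f ` K) = (\<Union>i\<in>K. var ` f i)" unfolding Vars_def by auto

definition F0 :: "'v \<Rightarrow> 'v \<Rightarrow> 'v \<Rightarrow> bool \<Rightarrow> bool \<Rightarrow> 'v cnf" where
  "F0 y a b hy ha = {{Pos a},{Pos b}} \<union> (if hy then {{Neg a, Neg b, Pos y},{Neg a, Neg b, Neg y}} else {})
     \<union> (if ha then {{Neg a, Neg b}} else {})"

definition GG :: "(nat \<Rightarrow> 'v) \<Rightarrow> (nat \<Rightarrow> 'v) \<Rightarrow> 'v \<Rightarrow> 'v \<Rightarrow> 'v \<Rightarrow> nat set \<Rightarrow> nat set \<Rightarrow> bool \<Rightarrow> bool \<Rightarrow> 'v cnf" where
  "GG x v y a b K W hy ha = (\<lambda>i. {Neg a, Neg b, Pos (x i)}) ` K \<union> (\<lambda>i. {Neg (x i), Pos (v i)}) ` K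
    \<union> (\<lambda>i. {Pos (x i), Pos (v i)}) ` K
    \<union> {insert (Pos a) ((\<lambda>i. Neg (v i)) ` W), insert (Pos b) ((\<lambda>i. Neg (v i)) ` W)}
    \<union> (if hy then {{Neg a, Neg b, Pos y},{Neg a, Neg b, Neg y}} else {})
    \<union> (if ha then {{Neg a, Neg b}} else {})"

locale setting =
  fixes x v :: "nat \<Rightarrow> 'v" and n :: nat and y a b :: 'v
  assumes xi: "inj_on x {1..n}" and vi: "inj_on v {1..n}"
    and yx: "y \<notin> x ` {1..n}"
    and vd: "v ` {1..n} \<inter> (x ` {1..n} \<union> {y, a, b}) = {}"
    and ab: "a \<noteq> b" and ax: "a \<notin> x ` {1..n} \<union> {y}" and bx: "b \<notin> x ` {1..n} \<union> {y}"
begin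

abbreviation "N \<equiv> {1..n}"
abbreviation "G \<equiv> GG x v y a b"

lemma xx[simp]: "i \<in> N \<Longrightarrow> j \<in> N \<Longrightarrow> x i = x j \<longleftrightarrow> i = j"
  using xi inj_on_eq_iff by metis
lemma vv[simp]: "i \<in> N \<Longrightarrow> j \<in> N \<Longrightarrow> v i = v j \<longleftrightarrow> i = j"
  using vi inj_on_eq_iff by metis
lemma dist[simp]: "i \<in> N \<Longrightarrow> j \<in> N \<Longrightarrow> v i \<noteq> x j"
  "i \<in> N \<Longrightarrow> v i \<noteq> y" "i \<in> N \<Longrightarrow> v i \<noteq> a" "i \<in> N \<Longrightarrow> v i \<noteq> b"
  "i \<in> N \<Longrightarrow> x i \<noteq> y" "i \<in> N \<Longrightarrow> x i \<noteq> a" "i \<in> N \<Longrightarrow> x i \<noteq> b"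
  "a \<noteq> b" "y \<noteq> a" "y \<noteq> b"
  using vd yx ab ax bx by blast+

lemma dist'[simp]: "i \<in> N \<Longrightarrow> j \<in> N \<Longrightarrow> x j \<noteq> v i"
  "i \<in> N \<Longrightarrow> y \<noteq> v i" "i \<in> N \<Longrightarrow> a \<noteq> v i" "i \<in> N \<Longrightarrow> b \<noteq> v i"
  "i \<in> N \<Longrightarrow> y \<noteq> x i" "i \<in> N \<Longrightarrow> a \<noteq> x i" "i \<in> N \<Longrightarrow> b \<noteq> x i"
  "b \<noteq> a" "a \<noteq> y" "b \<noteq> y"
  using dist by metis+

lemma Vn_eq: "Vn x n y a b v = G N N True False"
proof -
  have e1: "{insert (Neg a) (insert (Neg b) g) | g. g \<in> ({{Pos (x i)} | i. i \<in> N} \<union> {{Pos y}, {Neg y}})}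
    = (\<lambda>i. {Neg a, Neg b, Pos (x i)}) ` N \<union> {{Neg a, Neg b, Pos y},{Neg a, Neg b, Neg y}}"
    by blast
  have e2: "{Neg (v i) | i. i \<in> N} = (\<lambda>i. Neg (v i)) ` N" by blast
  have e3: "{{Neg (x i), Pos (v i)} | i. i \<in> N} = (\<lambda>i. {Neg (x i), Pos (v i)}) ` N" by blast
  have e4: "{{Pos (x i), Pos (v i)} | i. i \<in> N} = (\<lambda>i. {Pos (x i), Pos (v i)}) ` N" by blast
  show ?thesis unfolding Vn_def cX_def GG_def e1 e2 e3 e4 by auto
qed

lemma G_nounit: "W \<noteq> {} \<Longrightarrow> K \<subseteq> N \<Longrightarrow> {l} \<notin> G K W hy ha"
  unfolding GG_def by (auto simp: doubleton_eq_iff)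

lemma G_noempty: "W \<noteq> {} \<Longrightarrow> {} \<notin> G K W hy ha"
  unfolding GG_def by auto

lemma G_finite: "finite K \<Longrightarrow> finite W \<Longrightarrow> finite (G K W hy ha) \<and> (\<forall>C\<in>G K W hy ha. finite C)"
  unfolding GG_def by auto



lemma Vars_G: "Vars (G K W hy ha) = x ` K \<union> v ` K \<union> {a, b} \<union> v ` W \<union> (if hy then {y} else {})"
  unfolding GG_def by (simp add: Vars_Un Vars_insert Vars_empty Vars_image image_image) blast

lemma G_Vars_x: "j \<in> N \<Longrightarrow> K \<subseteq> N \<Longrightarrow> W \<subseteq> N \<Longrightarrow> x j \<in> Vars (G K W hy ha) \<Longrightarrow> j \<in> K"
  unfolding Vars_G
  by (auto split: if_splits)

lemma G_Vars_x2: "i \<in> K \<Longrightarrow> x i \<in> Vars (G K W hy ha)"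
  unfolding Vars_G by auto

lemma G_Vars_y: "K \<subseteq> N \<Longrightarrow> W \<subseteq> N \<Longrightarrow> y \<in> Vars (G K W hy ha) \<Longrightarrow> hy"
  unfolding Vars_G by (auto split: if_splits)

lemma core_id:
  assumes "var l \<notin> x ` K \<union> v ` K" "var l \<noteq> a" "var l \<noteq> b"
  shows "restrict ((\<lambda>i. {Neg a, Neg b, Pos (x i)}) ` K) {l} = (\<lambda>i. {Neg a, Neg b, Pos (x i)}) ` K"
    "restrict ((\<lambda>i. {Neg (x i), Pos (v i)}) ` K) {l} = (\<lambda>i. {Neg (x i), Pos (v i)}) ` K"
    "restrict ((\<lambda>i. {Pos (x i), Pos (v i)}) ` K) {l} = (\<lambda>i. {Pos (x i), Pos (v i)}) ` K"
  using assms by (auto intro!: restrict_id1 elim!: var.elims negate.elims)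

lemma ab_id:
  assumes "var l \<notin> v ` W" "var l \<noteq> a" "var l \<noteq> b"
  shows "restrict {insert (Pos a) ((\<lambda>i. Neg (v i)) ` W), insert (Pos b) ((\<lambda>i. Neg (v i)) ` W)} {l}
     = {insert (Pos a) ((\<lambda>i. Neg (v i)) ` W), insert (Pos b) ((\<lambda>i. Neg (v i)) ` W)}"
  using assms by (auto intro!: restrict_id1 elim!: var.elims negate.elims)

lemma e_id:
  assumes "var l \<noteq> a" "var l \<noteq> b" "var l \<noteq> y"
  shows "restrict (if hy then {{Neg a, Neg b, Pos y},{Neg a, Neg b, Neg y}} else {}) {l}
    = (if hy then {{Neg a, Neg b, Pos y},{Neg a, Neg b, Neg y}} else {})"
   "restrict (if ha then {{Neg a, Neg b}} else {}) {l} = (if ha then {{Neg a, Neg b}} else {})"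
  using assms by (auto intro!: restrict_id1 elim!: var.elims negate.elims)

lemma outs:
  assumes "K \<subseteq> N"
  shows "y \<notin> x ` K" "y \<notin> v ` K" "a \<notin> x ` K" "a \<notin> v ` K" "b \<notin> x ` K" "b \<notin> v ` K"
  using assms yx vd ax bx by blast+

lemma outs2:
  assumes "K \<subseteq> N" "i \<in> N"
  shows "x i \<notin> v ` K" "v i \<notin> x ` K"
  using assms vd by blast+

lemma outs3:
  assumes "K \<subseteq> N" "i \<in> N" "i \<notin> K"
  shows "x i \<notin> x ` K" "v i \<notin> v ` K"
  using assms xi vi by (meson inj_on_image_mem_iff subsetD)+

lemma G_restrict_y_gen:
  assumes K: "K \<subseteq> N" and W: "W \<subseteq> N" and l: "var l = y"
  shows "restrict (G K W True ha) {l} = G K W False True"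
proof -
  have o: "var l \<notin> x ` K \<union> v ` K" "var l \<noteq> a" "var l \<noteq> b" "var l \<notin> v ` W"
    using outs[OF K] outs[OF W] l by auto
  have e: "restrict {{Neg a, Neg b, Pos y},{Neg a, Neg b, Neg y}} {l} = {{Neg a, Neg b}}"
    using l by (cases l) (auto simp: restrict_insert)
  have e2: "restrict (if ha then {{Neg a, Neg b}} else {}) {l} = (if ha then {{Neg a, Neg b}} else {})"
    using l by (cases l) (auto simp: restrict_insert)
  show ?thesis unfolding GG_def if_True if_False restrict_Un core_id[OF o(1-3)] ab_id[OF o(4,2,3)] e e2
    by (cases ha) (simp_all add: Un_ac)
qed

lemma G_restrict_y: "K \<subseteq> N \<Longrightarrow> W \<subseteq> N \<Longrightarrow> restrict (G K W True ha) {Neg y} = G K W False True"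
  using G_restrict_y_gen[of K W "Neg y"] by simp

lemma G_restrict_y2: "K \<subseteq> N \<Longrightarrow> W \<subseteq> N \<Longrightarrow> restrict (G K W True ha) {Pos y} = G K W False True"
  using G_restrict_y_gen[of K W "Pos y"] by simp

lemma G_restrict_x_o:
  assumes "i \<notin> K" "insert i K \<subseteq> N" "W \<subseteq> N" "var l = x i"
  shows "var l \<notin> x ` K \<union> v ` K" "var l \<noteq> a" "var l \<noteq> b" "var l \<notin> v ` W" "var l \<noteq> y"
  using assms outs2[of K i] outs3[of K i] outs2[of W i] by auto

lemma G_restrict_xneg: "i \<notin> K \<Longrightarrow> insert i K \<subseteq> N \<Longrightarrow> W \<subseteq> N \<Longrightarrow>
  restrict (G (insert i K) W hy ha) {Neg (x i)} = insert {Pos (v i)} (G K W hy True)"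
proof -
  assume h: "i \<notin> K" "insert i K \<subseteq> N" "W \<subseteq> N"
  note o = G_restrict_x_o[OF h(1) h(2) h(3) var.simps(2)[of "x i"]]
  have i: "i \<in> N" using h by auto
  have p1: "restrict (insert {Neg a, Neg b, Pos (x i)} ((\<lambda>i. {Neg a, Neg b, Pos (x i)}) ` K)) {Neg (x i)}
     = insert {Neg a, Neg b} ((\<lambda>i. {Neg a, Neg b, Pos (x i)}) ` K)"
    using core_id(1)[of "Neg (x i)" K] o i by (auto simp: restrict_insert)
  have p2: "restrict (insert {Neg (x i), Pos (v i)} ((\<lambda>i. {Neg (x i), Pos (v i)}) ` K)) {Neg (x i)}
     = (\<lambda>i. {Neg (x i), Pos (v i)}) ` K"
    using core_id(2)[of "Neg (x i)" K] o i by (auto simp: restrict_insert)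
  have p3: "restrict (insert {Pos (x i), Pos (v i)} ((\<lambda>i. {Pos (x i), Pos (v i)}) ` K)) {Neg (x i)}
     = insert {Pos (v i)} ((\<lambda>i. {Pos (x i), Pos (v i)}) ` K)"
    using core_id(3)[of "Neg (x i)" K] o i by (auto simp: restrict_insert)
  show ?thesis unfolding GG_def restrict_Un image_insert p1 p2 p3 ab_id[of "Neg (x i)", OF o(4,2,3)]
     e_id[of "Neg (x i)", OF o(2,3,5)]
    by (cases ha) auto
qed

lemma G_restrict_xpos: "i \<notin> K \<Longrightarrow> insert i K \<subseteq> N \<Longrightarrow> W \<subseteq> N \<Longrightarrow>
  restrict (G (insert i K) W hy ha) {Pos (x i)} = insert {Pos (v i)} (G K W hy ha)"
proof -
  assume h: "i \<notin> K" "insert i K \<subseteq> N" "W \<subseteq> N"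
  note o = G_restrict_x_o[OF h(1) h(2) h(3) var.simps(1)[of "x i"]]
  have i: "i \<in> N" using h by auto
  have p1: "restrict (insert {Neg a, Neg b, Pos (x i)} ((\<lambda>i. {Neg a, Neg b, Pos (x i)}) ` K)) {Pos (x i)}
     = ((\<lambda>i. {Neg a, Neg b, Pos (x i)}) ` K)"
    using core_id(1)[of "Pos (x i)" K] o i by (auto simp: restrict_insert)
  have p2: "restrict (insert {Neg (x i), Pos (v i)} ((\<lambda>i. {Neg (x i), Pos (v i)}) ` K)) {Pos (x i)}
     = insert {Pos (v i)} ((\<lambda>i. {Neg (x i), Pos (v i)}) ` K)"
    using core_id(2)[of "Pos (x i)" K] o i by (auto simp: restrict_insert)
  have p3: "restrict (insert {Pos (x i), Pos (v i)} ((\<lambda>i. {Pos (x i), Pos (v i)}) ` K)) {Pos (x i)}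
     = ((\<lambda>i. {Pos (x i), Pos (v i)}) ` K)"
    using core_id(3)[of "Pos (x i)" K] o i by (auto simp: restrict_insert)
  show ?thesis unfolding GG_def restrict_Un image_insert p1 p2 p3 ab_id[of "Pos (x i)", OF o(4,2,3)]
     e_id[of "Pos (x i)", OF o(2,3,5)]
    by auto
qed

lemma G_restrict_v: "i \<notin> K \<Longrightarrow> i \<in> N \<Longrightarrow> K \<subseteq> N \<Longrightarrow> W \<subseteq> N \<Longrightarrow>
  restrict (insert {Pos (v i)} (G K W hy ha)) {Pos (v i)} = G K (W - {i}) hy ha"
proof -
  assume h: "i \<notin> K" "i \<in> N" "K \<subseteq> N" "W \<subseteq> N"
  have o: "var (Pos (v i)) \<notin> x ` K \<union> v ` K" "var (Pos (v i)) \<noteq> a" "var (Pos (v i)) \<noteq> b"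
     "var (Pos (v i)) \<noteq> y"
    using h outs2[of K i] outs3[of K i] by auto
  have ab: "restrict {insert (Pos a) ((\<lambda>i. Neg (v i)) ` W), insert (Pos b) ((\<lambda>i. Neg (v i)) ` W)} {Pos (v i)}
     = {insert (Pos a) ((\<lambda>i. Neg (v i)) ` (W - {i})), insert (Pos b) ((\<lambda>i. Neg (v i)) ` (W - {i}))}"
  proof -
    have "(\<lambda>i. Neg (v i)) ` W - {Neg (v i)} = (\<lambda>i. Neg (v i)) ` (W - {i})"
      using h vi by (auto simp: inj_on_def)
    then show ?thesis using h by (auto simp: restrict_insert)
  qed
  have r0: "\<And>X. restrict (insert {Pos (v i)} X) {Pos (v i)} = restrict X {Pos (v i)}"
    by (simp add: restrict_insert)
  show ?thesis unfolding r0 GG_def restrict_Un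
    unfolding core_id[OF o(1-3)] ab e_id[OF o(2-4)]
    by auto
qed

lemma H_up: "i \<notin> K \<Longrightarrow> i \<in> N \<Longrightarrow> K \<subseteq> N \<Longrightarrow>
  up_step (insert {Pos (v i)} (G K (insert i K) hy ha)) = G K K hy ha"
proof -
  assume h: "i \<notin> K" "i \<in> N" "K \<subseteq> N"
  have "up_step (insert {Pos (v i)} (G K (insert i K) hy ha)) = restrict (insert {Pos (v i)} (G K (insert i K) hy ha)) {Pos (v i)}"
    apply (rule up_step_unique) using G_nounit[of "insert i K" K] h by auto
  also have "\<dots> = G K (insert i K - {i}) hy ha"
    using h by (intro G_restrict_v) auto
  finally show ?thesis using h by simp
qed

lemma H_Vars: "finite K \<Longrightarrow> finite W \<Longrightarrow> finite (Vars (insert {Pos (v i)} (G K W hy ha)))"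
  using G_finite[of K W] by (intro finite_Vars) auto

lemma H_U_ne: "i \<notin> K \<Longrightarrow> i \<in> N \<Longrightarrow> K \<subseteq> N \<Longrightarrow> K \<noteq> {} \<Longrightarrow> finite K \<Longrightarrow>
  U (insert {Pos (v i)} (G K (insert i K) hy ha)) = G K K hy ha"
proof -
  assume h: "i \<notin> K" "i \<in> N" "K \<subseteq> N" "K \<noteq> {}" "finite K"
  let ?H = "insert {Pos (v i)} (G K (insert i K) hy ha)"
  have "v i \<in> Vars ?H" unfolding Vars_mem by auto
  then have "1 \<le> card (Vars ?H)" using H_Vars[of K "insert i K"] h(5)
    by (metis One_nat_def Suc_leI card_gt_0_iff empty_iff finite_insert)
  then have "U ?H = (up_step ^^ (card (Vars ?H) - 1)) (G K K hy ha)"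
    using U_shift H_up h by metis
  also have "\<dots> = G K K hy ha"
    using G_nounit[of K K] h by (intro funpow_fix up_step_nounit) auto
  finally show ?thesis .
qed

lemma G_empty_eq: "G {} {} hy ha = F0 y a b hy ha"
  unfolding GG_def F0_def by auto

lemma F0_empty:
  assumes "hy \<or> ha" "(if hy then 3 else 2) \<le> k"
  shows "{} \<in> (up_step ^^ k) (F0 y a b hy ha)"
proof -
  consider "hy" "ha" | "hy" "\<not> ha" | "\<not> hy" "ha" using assms by blast
  then show ?thesis
  proof cases
    case 1
    then have "F0 y a b hy ha = {{Pos a},{Pos b},{Neg a, Neg b, Pos y},{Neg a, Neg b, Neg y},{Neg a, Neg b}}"
      unfolding F0_def by auto
    then show ?thesis using Fb[of a b y] funpow_empty_mono[of "Suc (Suc 0)" _ k] assms 1 by simp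
  next
    case 2
    then have "F0 y a b hy ha = {{Pos a},{Pos b},{Neg a, Neg b, Pos y},{Neg a, Neg b, Neg y}}"
      unfolding F0_def by auto
    then show ?thesis using Fa[of a b y] funpow_empty_mono[of "Suc (Suc (Suc 0))" _ k] assms 2 by simp
  next
    case 3
    then have "F0 y a b hy ha = {{Pos a},{Pos b},{Neg a, Neg b}}"
      unfolding F0_def by auto
    then show ?thesis using Fc[of a b] funpow_empty_mono[of "Suc (Suc 0)" _ k] assms 3 by simp
  qed
qed

lemma H_U_empty: "i \<in> N \<Longrightarrow> hy \<or> ha \<Longrightarrow> {} \<in> U (insert {Pos (v i)} (G {} {i} hy ha))"
proof -
  assume h: "i \<in> N" "hy \<or> ha"
  let ?H = "insert {Pos (v i)} (G {} {i} hy ha)"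
  have sub: "{v i, a, b} \<union> (if hy then {y} else {}) \<subseteq> Vars ?H" unfolding Vars_insert Vars_G by auto
  have c: "card ({v i, a, b} \<union> (if hy then {y} else {})) = (if hy then 4 else 3)"
    using h by auto
  have c4: "(if hy then 4 else 3) \<le> card (Vars ?H)"
    using card_mono[OF H_Vars[of "{}" "{i}"] sub] c by simp
  then have c1: "1 \<le> card (Vars ?H)" by (auto split: if_splits)
  have "U ?H = (up_step ^^ (card (Vars ?H) - 1)) (G {} {} hy ha)"
    using U_shift[OF c1] H_up[of i "{}"] h by simp
  moreover have "{} \<in> (up_step ^^ (card (Vars ?H) - 1)) (G {} {} hy ha)"
    unfolding G_empty_eq using c4 h
    by (intro F0_empty) (auto split: if_splits)
  ultimately show ?thesis by simp
qed

lemma G_U: "K \<noteq> {} \<Longrightarrow> K \<subseteq> N \<Longrightarrow> U (G K K hy ha) = G K K hy ha"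
  using G_nounit[of K K] by (intro U_nounit) auto

lemma LB: "dmst (x ` N \<union> {y}) F T \<Longrightarrow> F = G K K hy ha \<Longrightarrow> K \<subseteq> N \<Longrightarrow> K \<noteq> {} \<Longrightarrow> finite K
   \<Longrightarrow> hy \<or> ha \<Longrightarrow> 2 ^ card K - 1 \<le> size T"
proof (induction arbitrary: K hy ha rule: dmst.induct)
  case (leaf F)
  then show ?case using G_U G_noempty by metis
next
  case (node F z T1 T2)
  have UF: "U F = G K K hy ha" using node.prems G_U by simp
  have zV: "z \<in> Vars (G K K hy ha)" and zB: "z \<in> x ` N \<union> {y}" using node.hyps(2) UF by auto
  from zB show ?case
  proof
    assume "z \<in> {y}"
    then have zy: "z = y" by simp
    then have hy using G_Vars_y[of K K hy ha] zV node.prems by auto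
    have "U (restrict (U F) {Neg z}) = G K K False True"
      unfolding UF zy using \<open>hy\<close> G_restrict_y[of K K ha] G_U[of K False True] node.prems by simp
    then have "2 ^ card K - 1 \<le> size T1" using node.IH(1)[of K False True] node.prems by simp
    then show ?thesis by simp
  next
    assume "z \<in> x ` N"
    then obtain j where j: "j \<in> N" "z = x j" by auto
    then have jK: "j \<in> K" using G_Vars_x[of j K K hy ha] zV node.prems by auto
    define K' where "K' = K - {j}"
    have KK: "K = insert j K'" "j \<notin> K'" "finite K'" "K' \<subseteq> N" using jK node.prems unfolding K'_def by auto
    have cK: "card K = Suc (card K')" using KK by simp
    show ?thesis
    proof (cases "K' = {}")
      case True
      then show ?thesis using cK by simp
    next
      case False
      have "U (restrict (U F) {Neg z}) = G K' K' hy True"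
        unfolding UF j(2) using G_restrict_xneg[of j K' K hy ha] H_U_ne[of j K' hy True] KK False j node.prems
        by simp
      then have s1: "2 ^ card K' - 1 \<le> size T1" using node.IH(1)[of K' hy True] KK False by simp
      have "U (restrict (U F) {Pos z}) = G K' K' hy ha"
        unfolding UF j(2) using G_restrict_xpos[of j K' K hy ha] H_U_ne[of j K' hy ha] KK False j node.prems
        by simp
      then have s2: "2 ^ card K' - 1 \<le> size T2" using node.IH(2)[of K' hy ha] KK False node.prems by simp
      have "(1::nat) \<le> 2 ^ card K'" by simp
      then show ?thesis using s1 s2 cK by simp
    qed
  qed
qed

lemma UB: "finite K \<Longrightarrow> K \<noteq> {} \<Longrightarrow> K \<subseteq> N \<Longrightarrow> hy \<or> ha \<Longrightarrow>
   \<exists>T. dmst (x ` N \<union> {y}) (G K K hy ha) T \<and> size T = 2 ^ card K - 1"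
proof (induction K arbitrary: hy ha rule: finite_ne_induct)
  case (singleton i)
  have i: "i \<in> N" using singleton by auto
  have UG: "U (G {i} {i} hy ha) = G {i} {i} hy ha" using G_U[of "{i}"] i by simp
  have l1: "dmst (x ` N \<union> {y}) (U (restrict (U (G {i} {i} hy ha)) {Neg (x i)})) Leaf"
  proof (rule dmst.leaf)
    have "restrict (U (G {i} {i} hy ha)) {Neg (x i)} = insert {Pos (v i)} (G {} {i} hy True)"
      unfolding UG using G_restrict_xneg[of i "{}" "{i}" hy ha] i by simp
    then show "{} \<in> U (U (restrict (U (G {i} {i} hy ha)) {Neg (x i)}))"
      using H_U_empty[OF i, of hy True] U_empty by simp
  qed
  have l2: "dmst (x ` N \<union> {y}) (U (restrict (U (G {i} {i} hy ha)) {Pos (x i)})) Leaf"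
  proof (rule dmst.leaf)
    have "restrict (U (G {i} {i} hy ha)) {Pos (x i)} = insert {Pos (v i)} (G {} {i} hy ha)"
      unfolding UG using G_restrict_xpos[of i "{}" "{i}" hy ha] i by simp
    then show "{} \<in> U (U (restrict (U (G {i} {i} hy ha)) {Pos (x i)}))"
      using H_U_empty[OF i, of hy ha] U_empty singleton by simp
  qed
  have "dmst (x ` N \<union> {y}) (G {i} {i} hy ha) (Node Leaf (x i) Leaf)"
    apply (rule dmst.node[OF _ _ l1 l2])
    using UG G_noempty[of "{i}" "{i}"] G_Vars_x2[of i "{i}"] i by auto
  then show ?case by auto
next
  case (insert i K)
  have i: "i \<in> N" and KN: "K \<subseteq> N" using insert by auto
  obtain T1 where T1: "dmst (x ` N \<union> {y}) (G K K hy True) T1" "size T1 = 2 ^ card K - 1"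
    using insert.IH[of hy True] KN by auto
  obtain T2 where T2: "dmst (x ` N \<union> {y}) (G K K hy ha) T2" "size T2 = 2 ^ card K - 1"
    using insert.IH[of hy ha] KN insert.prems by auto
  have UG: "U (G (insert i K) (insert i K) hy ha) = G (insert i K) (insert i K) hy ha"
    using G_U[of "insert i K"] insert by simp
  have e1: "U (restrict (U (G (insert i K) (insert i K) hy ha)) {Neg (x i)}) = G K K hy True"
    unfolding UG using G_restrict_xneg[of i K "insert i K" hy ha] H_U_ne[of i K hy True] insert i KN by simp
  have e2: "U (restrict (U (G (insert i K) (insert i K) hy ha)) {Pos (x i)}) = G K K hy ha"
    unfolding UG using G_restrict_xpos[of i K "insert i K" hy ha] H_U_ne[of i K hy ha] insert i KN by simp
  have "dmst (x ` N \<union> {y}) (G (insert i K) (insert i K) hy ha) (Node T1 (x i) T2)"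
    apply (rule dmst.node)
    using UG G_noempty[of "insert i K" "insert i K"] G_Vars_x2[of i "insert i K"] i e1 e2 T1 T2 by auto
  moreover have "size (Node T1 (x i) T2) = 2 ^ card (insert i K) - 1"
  proof -
    obtain m where m: "(2::nat) ^ card K = Suc m"
      by (metis not0_implies_Suc power_not_zero zero_neq_numeral)
    show ?thesis using T1 T2 insert m by simp
  qed
  ultimately show ?case by blast
qed

end

theorem corollary4:
  fixes x v :: "nat \<Rightarrow> 'v" and n :: nat and y a b :: 'v
  assumes "inj_on x {1..n}" and "inj_on v {1..n}"
    and "y \<notin> x ` {1..n}"
    and "v ` {1..n} \<inter> (x ` {1..n} \<union> {y, a, b}) = {}"
    and "a \<noteq> b" and "a \<notin> x ` {1..n} \<union> {y}" and "b \<notin> x ` {1..n} \<union> {y}"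
  shows "(\<exists>T. dmst (x ` {1..n} \<union> {y}) (Vn x n y a b v) T \<and> size T = 2 ^ n - 1)
       \<and> (\<forall>T. dmst (x ` {1..n} \<union> {y}) (Vn x n y a b v) T \<longrightarrow> 2 ^ n - 1 \<le> size T)"
proof -
  interpret setting x v n y a b using assms by unfold_locales
  show ?thesis
  proof (cases "n = 0")
    case True
    then have N: "{1..n} = ({}::nat set)" by simp
    have F: "Vn x n y a b v = F0 y a b True False" using Vn_eq G_empty_eq N by simp
    have sub: "{a, b, y} \<subseteq> Vars (F0 y a b True False)" unfolding F0_def by (simp add: Vars_Un Vars_insert Vars_empty)
    have fin: "finite (Vars (F0 y a b True False))" unfolding F0_def by (intro finite_Vars) auto
    have "card {a, b, y} = 3" by simp
    then have "3 \<le> card (Vars (F0 y a b True False))" using card_mono[OF fin sub] by simp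
    then have "{} \<in> U (Vn x n y a b v)" unfolding F U_def by (intro F0_empty) auto
    then have "dmst (x ` {1..n} \<union> {y}) (Vn x n y a b v) Leaf" by (rule dmst.leaf)
    then show ?thesis using True by auto
  next
    case False
    have K: "finite {1..n}" "{1..n} \<noteq> {}" "card {1..n} = n" using False by auto
    show ?thesis
      using UB[OF K(1,2), of True False] LB[of _ _ "{1..n}" True False] K Vn_eq by auto
  qed
qed

end
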